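(* Let $L\ge 2$ be an integer and let $a_0,\dots,a_{L-2},b_0,\dots,b_{L-1}$ and $\tilde a_0,\dots,\tilde a_{L-2},\tilde b_0,\dots,\tilde b_{L-1}$ be real numbers. Let $\mathcal{B}\in\mathcal{L}^{2}$ and $\tilde{\mathcal{B}}\in\mathcal{L}^{2,c}$ (with lag $l<L$) be single-input single-output behaviors with signals $w=(u,y)$, and suppose their length-$L$ restricted behaviors, written in the coordinate ordering $w=\mathrm{col}(y_0,u_0,y_1,u_1,\dots,y_{L-2},u_{L-2},u_{L-1},y_{L-1})\in\mathbb{R}^{2L}$, are $$\mathcal{B}|_L=\Big\{w:\ y_{L-1}=\sum_{k=0}^{L-2}a_k y_k+\sum_{k=0}^{L-1}b_k u_k\Big\},\qquad \tilde{\mathcal{B}}|_L=\Big\{w:\ y_{L-1}=\sum_{k=0}^{L-2}\tilde a_k y_k+\sum_{k=0}^{L-1}\tilde b_k u_k\Big\}.$$ Define the row vectors $F=[a_0\ b_0\ a_1\ b_1\ \cdots\ a_{L-2}\ b_{L-2}\ b_{L-1}]$ and $\tilde F=[\tilde a_0\ \tilde b_0\ \cdots\ \tilde a_{L-2}\ \tilde b_{L-2}\ \tilde b_{L-1}]$ in $\mathbb{R}^{1\times(2L-1)}$. If $\|F-\tilde F\|_2\le\epsilon$, then $\mathrm{gap}_L(\mathcal{B},\tilde{\mathcal{B}})\le\epsilon$.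
   Context: $\mathcal{L}^{q}$: class of complete (closed under pointwise convergence) linear time-invariant behaviors $\mathcal{B}\subseteq(\mathbb{R}^q)^{\mathbb{Z}_{\ge0}}$; $\mathcal{L}^{q,c}$ the subclass with complexity $c=(m,l,n)$ (number of inputs, lag, order). The restricted behavior $\mathcal{B}|_L\subseteq\mathbb{R}^{qL}$ is the set of length-$L$ windows of trajectories of $\mathcal{B}$ (here with coordinates ordered as in the claim, the same ordering used for both behaviors). For subspaces $\mathcal{V},\mathcal{W}\subseteq\mathbb{R}^N$ with orthogonal projectors $P_{\mathcal{V}},P_{\mathcal{W}}$, $\mathrm{gap}(\mathcal{V},\mathcal{W})=\|P_{\mathcal{V}}-P_{\mathcal{W}}\|_2$ (spectral norm), and $\mathrm{gap}_L(\mathcal{B},\tilde{\mathcal{B}})=\mathrm{gap}(\mathcal{B}|_L,\tilde{\mathcal{B}}|_L)$. For a row vector, $\|\cdot\|_2$ is the Euclidean norm. *)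

theory Defs
  imports "HOL-Analysis.Analysis"
begin

text \<open>Trajectories with q = 2 signals, w(t) = (u(t), y(t)).\<close>
type_synonym traj = "nat \<Rightarrow> real \<times> real"

definition lin_space :: "traj set \<Rightarrow> bool" where
  "lin_space B \<longleftrightarrow> (\<lambda>_. (0,0)) \<in> B \<and> (\<forall>v\<in>B. \<forall>w\<in>B. (\<lambda>t. v t + w t) \<in> B)
     \<and> (\<forall>c::real. \<forall>w\<in>B. (\<lambda>t. (c * fst (w t), c * snd (w t))) \<in> B)"

definition shift_invariant :: "traj set \<Rightarrow> bool" where
  "shift_invariant B \<longleftrightarrow> (\<forall>w\<in>B. (\<lambda>t. w (t + 1)) \<in> B)"

definition complete_beh :: "traj set \<Rightarrow> bool" where
  "complete_beh B \<longleftrightarrow> (\<forall>ws w. (\<forall>k. ws k \<in> B) \<and> (\<forall>t. (\<lambda>k. ws k t) \<longlonglongrightarrow> w t) \<longrightarrow> w \<in> B)"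

definition LTI2 :: "traj set \<Rightarrow> bool" where
  "LTI2 B \<longleftrightarrow> lin_space B \<and> shift_invariant B \<and> complete_beh B"

definition window :: "nat \<Rightarrow> traj \<Rightarrow> traj" where
  "window L w = (\<lambda>i. if i < L then w i else (0,0))"

definition restr :: "traj set \<Rightarrow> nat \<Rightarrow> traj set" where
  "restr B L = window L ` B"

text \<open>Lag: least l such that B is (l+1)-complete (Willems' characterization).\<close>
definition lag :: "traj set \<Rightarrow> nat" where
  "lag B = (LEAST l. \<forall>w. (\<forall>t. window (l+1) (\<lambda>i. w (t + i)) \<in> restr B (l+1)) \<longrightarrow> w \<in> B)"

text \<open>Coordinate vector in R^(2L), ordering col(y0,u0,...,y_{L-2},u_{L-2},u_{L-1},y_{L-1}),
  represented as nat => real with zeros at indices >= 2L.\<close>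
definition coordvec :: "nat \<Rightarrow> traj \<Rightarrow> (nat \<Rightarrow> real)" where
  "coordvec L v = (\<lambda>j. if j < 2*L then
       (if j = 2*L - 1 then snd (v (L - 1))
        else if j = 2*L - 2 then fst (v (L - 1))
        else if even j then snd (v (j div 2)) else fst (v (j div 2)))
     else 0)"

definition restrB :: "traj set \<Rightarrow> nat \<Rightarrow> (nat \<Rightarrow> real) set" where
  "restrB B L = coordvec L ` restr B L"

text \<open>Euclidean geometry on R^N, vectors as nat => real supported on {0..<N}.\<close>
definition vinner :: "nat \<Rightarrow> (nat \<Rightarrow> real) \<Rightarrow> (nat \<Rightarrow> real) \<Rightarrow> real" where
  "vinner N x z = (\<Sum>i<N. x i * z i)"

definition vnorm :: "nat \<Rightarrow> (nat \<Rightarrow> real) \<Rightarrow> real" where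
  "vnorm N x = sqrt (\<Sum>i<N. (x i)\<^sup>2)"

definition proj :: "nat \<Rightarrow> (nat \<Rightarrow> real) set \<Rightarrow> (nat \<Rightarrow> real) \<Rightarrow> (nat \<Rightarrow> real)" where
  "proj N V x = (THE p. p \<in> V \<and> (\<forall>v\<in>V. vinner N (\<lambda>i. x i - p i) v = 0))"

text \<open>gap(V,W) = spectral norm of P_V - P_W = sup over the unit ball.\<close>
definition gap :: "nat \<Rightarrow> (nat \<Rightarrow> real) set \<Rightarrow> (nat \<Rightarrow> real) set \<Rightarrow> real" where
  "gap N V W = Sup {vnorm N (\<lambda>i. proj N V x i - proj N W x i) | x. (\<forall>i\<ge>N. x i = 0) \<and> vnorm N x \<le> 1}"

definition gapL :: "nat \<Rightarrow> traj set \<Rightarrow> traj set \<Rightarrow> real" where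
  "gapL L B B' = gap (2*L) (restrB B L) (restrB B' L)"

definition Fvec :: "nat \<Rightarrow> (nat \<Rightarrow> real) \<Rightarrow> (nat \<Rightarrow> real) \<Rightarrow> (nat \<Rightarrow> real)" where
  "Fvec L a b = (\<lambda>j. if j < 2*L - 1 then
       (if j = 2*L - 2 then b (L - 1) else if even j then a (j div 2) else b (j div 2))
     else 0)"

end

theory Submission
  imports Defs
begin

lemma vinner_sym: "vinner N x z = vinner N z x"
  by (simp add: vinner_def mult.commute)
lemma vinner_diff_r: "vinner N x (\<lambda>i. y i - z i) = vinner N x y - vinner N x z"
  by (simp add: vinner_def algebra_simps sum_subtractf)
lemma vinner_diff_l: "vinner N (\<lambda>i. y i - z i) x = vinner N y x - vinner N z x"
  by (simp add: vinner_def algebra_simps sum_subtractf)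
lemma vinner_scale_r: "vinner N x (\<lambda>i. c * y i) = c * vinner N x y"
  by (simp add: vinner_def algebra_simps sum_distrib_left)
lemma vinner_scale_l: "vinner N (\<lambda>i. c * y i) x = c * vinner N y x"
  by (simp add: vinner_def algebra_simps sum_distrib_left)
lemma vinner_self_nonneg: "vinner N x x \<ge> 0"
  by (simp add: vinner_def sum_nonneg)
lemma vnorm_vinner: "vnorm N x = sqrt (vinner N x x)"
  by (simp add: vnorm_def vinner_def power2_eq_square)

lemma proj_hyper:
  assumes nsupp: "\<forall>i\<ge>N. n i = 0" and nn: "vinner N n n > 0" and xsupp: "\<forall>i\<ge>N. x i = 0"
  shows "proj N {v. (\<forall>i\<ge>N. v i = 0) \<and> vinner N n v = 0} x
         = (\<lambda>i. x i - vinner N n x / vinner N n n * n i)"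
proof -
  define V where "V = {v. (\<forall>i\<ge>N. v i = 0) \<and> vinner N n v = 0}"
  define c where "c = vinner N n x / vinner N n n"
  define p where "p = (\<lambda>i. x i - c * n i)"
  have pV: "p \<in> V"
  proof -
    have "vinner N n p = vinner N n x - c * vinner N n n"
      unfolding p_def by (simp add: vinner_diff_r vinner_scale_r)
    also have "\<dots> = 0" using nn by (simp add: c_def)
    finally show ?thesis using nsupp xsupp by (simp add: V_def p_def)
  qed
  have porth: "\<forall>v\<in>V. vinner N (\<lambda>i. x i - p i) v = 0"
  proof
    fix v assume "v \<in> V"
    then have "vinner N n v = 0" by (simp add: V_def)
    moreover have "(\<lambda>i. x i - p i) = (\<lambda>i. c * n i)" by (simp add: p_def)
    ultimately show "vinner N (\<lambda>i. x i - p i) v = 0" by (simp add: vinner_scale_l)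
  qed
  have uniq: "q = p" if qV: "q \<in> V" and qorth: "\<forall>v\<in>V. vinner N (\<lambda>i. x i - q i) v = 0" for q
  proof -
    define w where "w = (\<lambda>i. p i - q i)"
    have wV: "w \<in> V" using pV qV
      by (simp add: V_def w_def vinner_diff_r)
    have "vinner N (\<lambda>i. x i - q i) w = 0" using qorth wV by blast
    moreover have "vinner N (\<lambda>i. x i - p i) w = 0" using porth wV by blast
    ultimately have "vinner N w w = 0"
    proof -
      assume a: "vinner N (\<lambda>i. x i - q i) w = 0" "vinner N (\<lambda>i. x i - p i) w = 0"
      have "w = (\<lambda>i. (x i - q i) - (x i - p i))" by (auto simp: w_def)
      then have "vinner N w w = vinner N (\<lambda>i. x i - q i) w - vinner N (\<lambda>i. x i - p i) w"
        by (metis (no_types) vinner_diff_l)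
      then show ?thesis using a by simp
    qed
    then have "\<forall>i\<in>{..<N}. w i * w i = 0"
      unfolding vinner_def by (subst sum_nonneg_eq_0_iff[symmetric]) auto
    then have "\<forall>i<N. p i = q i" by (simp add: w_def)
    moreover have "\<forall>i\<ge>N. p i = q i" using pV qV by (simp add: V_def)
    ultimately show ?thesis
    proof (intro ext)
      fix i show "q i = p i" using \<open>\<forall>i<N. p i = q i\<close> \<open>\<forall>i\<ge>N. p i = q i\<close>
        by (cases "i < N") auto
    qed
  qed
  have "proj N V x = p"
    unfolding proj_def
    proof (rule the_equality)
      show "p \<in> V \<and> (\<forall>v\<in>V. vinner N (\<lambda>i. x i - p i) v = 0)" using pV porth by blast
      fix q assume "q \<in> V \<and> (\<forall>v\<in>V. vinner N (\<lambda>i. x i - q i) v = 0)"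
      then show "q = p" using uniq by blast
    qed
  then show ?thesis by (simp add: V_def p_def c_def)
qed

lemma vinner_lin2:
  "vinner N (\<lambda>i. a * x i - b * y i) (\<lambda>i. c * z i - d * w i)
   = a * c * vinner N x z - a * d * vinner N x w - b * c * vinner N y z + b * d * vinner N y w"
  by (simp add: vinner_def algebra_simps sum_subtractf sum.distrib sum_distrib_left)

lemma vinner_CS: "(vinner N x z)\<^sup>2 \<le> vinner N x x * vinner N z z"
  using Cauchy_Schwarz_ineq_sum[of x z "{..<N}"] by (simp add: vinner_def power2_eq_square)

lemma gram:
  assumes "vinner N n n > 0"
  shows "vinner N n n * vinner N m m * vinner N x x - vinner N n n * (vinner N m x)\<^sup>2
     - vinner N m m * (vinner N n x)\<^sup>2 - (vinner N n m)\<^sup>2 * vinner N x x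
     + 2 * vinner N n m * vinner N n x * vinner N m x \<ge> 0"
proof -
  define nn where "nn = vinner N n n"
  define mm where "mm = vinner N m m"
  define X where "X = vinner N x x"
  define al where "al = vinner N n x"
  define be where "be = vinner N m x"
  define nm where "nm = vinner N n m"
  define w where "w = (\<lambda>i. nn * x i - al * n i)"
  define z where "z = (\<lambda>i. nn * m i - nm * n i)"
  have sym: "vinner N x n = al" "vinner N x m = be" "vinner N m n = nm"
    by (simp_all add: al_def be_def nm_def vinner_sym)
  have wz: "vinner N w z = nn * (nn * be - al * nm)"
    unfolding w_def z_def vinner_lin2 using sym
    by (simp add: nn_def[symmetric] al_def[symmetric] nm_def[symmetric]) (simp add: algebra_simps)
  have ww: "vinner N w w = nn * (nn * X - al\<^sup>2)"
    unfolding w_def vinner_lin2 using sym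
    by (simp add: nn_def[symmetric] al_def[symmetric] X_def[symmetric]) (simp add: algebra_simps power2_eq_square)
  have zz: "vinner N z z = nn * (nn * mm - nm\<^sup>2)"
    unfolding z_def vinner_lin2 using sym
    by (simp add: nn_def[symmetric] mm_def[symmetric] nm_def[symmetric]) (simp add: algebra_simps power2_eq_square)
  have "(nn * (nn * be - al * nm))\<^sup>2 \<le> nn * (nn * X - al\<^sup>2) * (nn * (nn * mm - nm\<^sup>2))"
    using vinner_CS[of N w z] wz ww zz by simp
  then have "nn\<^sup>2 * (nn * be - al * nm)\<^sup>2 \<le> nn\<^sup>2 * ((nn * X - al\<^sup>2) * (nn * mm - nm\<^sup>2))"
    by (simp add: algebra_simps power2_eq_square)
  then have c: "(nn * be - al * nm)\<^sup>2 \<le> (nn * X - al\<^sup>2) * (nn * mm - nm\<^sup>2)"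
    using assms nn_def by (simp add: mult_le_cancel_left)
  have "nn * (nn * mm * X - nn * be\<^sup>2 - mm * al\<^sup>2 - nm\<^sup>2 * X + 2 * nm * al * be)
        = (nn * X - al\<^sup>2) * (nn * mm - nm\<^sup>2) - (nn * be - al * nm)\<^sup>2"
    by (simp add: algebra_simps power2_eq_square)
  then have "nn * (nn * mm * X - nn * be\<^sup>2 - mm * al\<^sup>2 - nm\<^sup>2 * X + 2 * nm * al * be) \<ge> 0"
    using c by simp
  then have "nn * mm * X - nn * be\<^sup>2 - mm * al\<^sup>2 - nm\<^sup>2 * X + 2 * nm * al * be \<ge> 0"
    using assms nn_def by (simp add: zero_le_mult_iff)
  then show ?thesis by (simp add: nn_def mm_def X_def al_def be_def nm_def)
qed

lemma vinner_ge_last: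
  assumes "N \<ge> 1" "n (N - 1) = 1" shows "vinner N n n \<ge> 1"
proof -
  have "(\<lambda>i. n i * n i) (N - 1) \<le> (\<Sum>i<N. n i * n i)"
    by (rule member_le_sum) (use assms in auto)
  then show ?thesis using assms by (simp add: vinner_def)
qed

lemma scalar_bound:
  fixes nn mm nm al be X dd :: real
  assumes nn: "nn \<ge> 1" and mm: "mm \<ge> 1" and X0: "X \<ge> 0" and X1: "X \<le> 1" and dd: "dd \<ge> 0"
    and g: "nn * mm * X - nn * be\<^sup>2 - mm * al\<^sup>2 - nm\<^sup>2 * X + 2 * nm * al * be \<ge> 0"
    and l: "nn * mm - nm\<^sup>2 \<le> nn * dd"
  shows "(be / mm)\<^sup>2 * mm - 2 * (be / mm) * (al / nn) * nm + (al / nn)\<^sup>2 * nn \<le> dd"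
proof -
  have e: "nn * mm * ((be / mm)\<^sup>2 * mm - 2 * (be / mm) * (al / nn) * nm + (al / nn)\<^sup>2 * nn)
     = nn * be\<^sup>2 - 2 * be * al * nm + mm * al\<^sup>2"
    using nn mm by (simp add: field_simps power2_eq_square)
  have "nn * be\<^sup>2 - 2 * be * al * nm + mm * al\<^sup>2 \<le> X * (nn * mm - nm\<^sup>2)"
    using g by (simp add: algebra_simps)
  also have "\<dots> \<le> X * (nn * dd)" using l X0 by (simp add: mult_left_mono)
  also have "\<dots> \<le> 1 * (nn * dd)" using X1 nn dd by (intro mult_right_mono) auto
  also have "\<dots> \<le> mm * (nn * dd)" using nn mm dd by (intro mult_right_mono) auto
  also have "\<dots> = nn * mm * dd" by (simp add: ac_simps)
  finally have "nn * mm * ((be / mm)\<^sup>2 * mm - 2 * (be / mm) * (al / nn) * nm + (al / nn)\<^sup>2 * nn)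
      \<le> nn * mm * dd" using e by simp
  moreover have "nn * mm > 0" using nn mm by simp
  ultimately show ?thesis using mult_le_cancel_left_pos[of "nn * mm"] by blast
qed

lemma gap_hyper:
  assumes N: "N \<ge> 1" and ns: "\<forall>i\<ge>N. n i = 0" and ms: "\<forall>i\<ge>N. m i = 0"
    and n1: "n (N - 1) = 1" and m1: "m (N - 1) = 1"
  shows "gap N {v. (\<forall>i\<ge>N. v i = 0) \<and> vinner N n v = 0} {v. (\<forall>i\<ge>N. v i = 0) \<and> vinner N m v = 0}
         \<le> vnorm N (\<lambda>i. m i - n i)"
proof -
  define nn where "nn = vinner N n n"
  define mm where "mm = vinner N m m"
  define nm where "nm = vinner N n m"
  define d where "d = (\<lambda>i. m i - n i)"
  define dd where "dd = vinner N d d"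
  have nn1: "nn \<ge> 1" using vinner_ge_last[of N n, OF N n1] by (simp add: nn_def)
  have mm1: "mm \<ge> 1" using vinner_ge_last[of N m, OF N m1] by (simp add: mm_def)
  have dd0: "dd \<ge> 0" by (simp add: dd_def vinner_self_nonneg)
  have mn: "vinner N m n = nm" by (simp add: nm_def vinner_sym)
  have dd_eq: "dd = mm - 2 * nm + nn"
  proof -
    have "d = (\<lambda>i. 1 * m i - 1 * n i)" by (simp add: d_def)
    then have "dd = vinner N (\<lambda>i. 1 * m i - 1 * n i) (\<lambda>i. 1 * m i - 1 * n i)" by (simp add: dd_def)
    then show ?thesis unfolding vinner_lin2 using mn by (simp add: mm_def nn_def nm_def)
  qed
  have nd: "vinner N n d = nm - nn"
    by (simp add: d_def vinner_diff_r nm_def nn_def)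
  have lag: "nn * mm - nm\<^sup>2 \<le> nn * dd"
  proof -
    have "nn * mm - nm\<^sup>2 = nn * dd - (nm - nn)\<^sup>2" unfolding dd_eq power2_eq_square by algebra
    then show ?thesis by simp
  qed
  let ?S = "{vnorm N (\<lambda>i. proj N {v. (\<forall>i\<ge>N. v i = 0) \<and> vinner N n v = 0} x i
                 - proj N {v. (\<forall>i\<ge>N. v i = 0) \<and> vinner N m v = 0} x i) | x. (\<forall>i\<ge>N. x i = 0) \<and> vnorm N x \<le> 1}"
  have ne: "?S \<noteq> {}"
  proof -
    have "\<exists>x. (\<forall>i\<ge>N. x i = (0::real)) \<and> vnorm N x \<le> 1"
      by (intro exI[of _ "\<lambda>_. 0"]) (simp add: vnorm_def)
    then show ?thesis by simp
  qed
  have bound: "s \<le> vnorm N d" if "s \<in> ?S" for s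
  proof -
    obtain x where xs: "\<forall>i\<ge>N. x i = 0" and x1: "vnorm N x \<le> 1" and s: "s = vnorm N (\<lambda>i. proj N {v. (\<forall>i\<ge>N. v i = 0) \<and> vinner N n v = 0} x i
                 - proj N {v. (\<forall>i\<ge>N. v i = 0) \<and> vinner N m v = 0} x i)"
      using \<open>s \<in> ?S\<close> by blast
    define al where "al = vinner N n x"
    define be where "be = vinner N m x"
    define X where "X = vinner N x x"
    have X0: "X \<ge> 0" by (simp add: X_def vinner_self_nonneg)
    have X1: "X \<le> 1" using x1 X0 by (simp add: vnorm_vinner X_def)
    have pn: "proj N {v. (\<forall>i\<ge>N. v i = 0) \<and> vinner N n v = 0} x = (\<lambda>i. x i - al / nn * n i)"
      using proj_hyper[OF ns _ xs] nn1 by (simp add: al_def nn_def)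
    have pm: "proj N {v. (\<forall>i\<ge>N. v i = 0) \<and> vinner N m v = 0} x = (\<lambda>i. x i - be / mm * m i)"
      using proj_hyper[OF ms _ xs] mm1 by (simp add: be_def mm_def)
    have D: "(\<lambda>i. proj N {v. (\<forall>i\<ge>N. v i = 0) \<and> vinner N n v = 0} x i
                 - proj N {v. (\<forall>i\<ge>N. v i = 0) \<and> vinner N m v = 0} x i)
           = (\<lambda>i. (be / mm) * m i - (al / nn) * n i)" unfolding pn pm by auto
    have DD: "vinner N (\<lambda>i. (be / mm) * m i - (al / nn) * n i) (\<lambda>i. (be / mm) * m i - (al / nn) * n i)
       = (be / mm)\<^sup>2 * mm - 2 * (be / mm) * (al / nn) * nm + (al / nn)\<^sup>2 * nn"
      unfolding vinner_lin2 using mn by (simp add: mm_def nn_def nm_def algebra_simps power2_eq_square)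
    have g: "nn * mm * X - nn * be\<^sup>2 - mm * al\<^sup>2 - nm\<^sup>2 * X + 2 * nm * al * be \<ge> 0"
      using gram[of N n m x] nn1 by (simp add: nn_def mm_def X_def al_def be_def nm_def)
    have "vinner N (\<lambda>i. (be / mm) * m i - (al / nn) * n i) (\<lambda>i. (be / mm) * m i - (al / nn) * n i) \<le> dd"
      unfolding DD by (rule scalar_bound[OF nn1 mm1 X0 X1 dd0 g lag])
    then show ?thesis unfolding s D vnorm_vinner dd_def by (rule real_sqrt_le_mono)
  qed
  show ?thesis unfolding gap_def d_def[symmetric]
    by (rule cSup_least[OF ne]) (use bound in blast)
qed

lemma sum_pairs: fixes M :: nat and f :: "nat \<Rightarrow> real" shows "(\<Sum>j<2*M. f j) = (\<Sum>k<M. f (2*k) + f (2*k+1))"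
  by (induction M) (simp_all add: sum.distrib algebra_simps)

lemma F_coord:
  "(\<Sum>j<2*M+1. Fvec (Suc M) a b j * coordvec (Suc M) w j)
   = (\<Sum>k<M. a k * snd (w k)) + (\<Sum>k<Suc M. b k * fst (w k))"
proof -
  let ?f = "\<lambda>j. Fvec (Suc M) a b j * coordvec (Suc M) w j"
  have "(\<Sum>j<2*M+1. ?f j) = (\<Sum>j<2*M. ?f j) + ?f (2*M)" by simp
  also have "(\<Sum>j<2*M. ?f j) = (\<Sum>k<M. ?f (2*k) + ?f (2*k+1))" by (rule sum_pairs)
  also have "\<dots> = (\<Sum>k<M. a k * snd (w k) + b k * fst (w k))"
  proof (rule sum.cong)
    fix k assume "k \<in> {..<M}"
    then have k: "k < M" by simp
    have "?f (2*k) = a k * snd (w k)" using k by (simp add: Fvec_def coordvec_def)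
    moreover have "?f (2*k+1) = b k * fst (w k)" using k by (simp add: Fvec_def coordvec_def)
    ultimately show "?f (2*k) + ?f (2*k+1) = a k * snd (w k) + b k * fst (w k)" by simp
  qed simp
  also have "?f (2*M) = b M * fst (w M)" by (simp add: Fvec_def coordvec_def)
  finally show ?thesis by (simp add: sum.distrib)
qed

definition nvec :: "nat \<Rightarrow> (nat \<Rightarrow> real) \<Rightarrow> (nat \<Rightarrow> real) \<Rightarrow> nat \<Rightarrow> real" where
  "nvec L a b = (\<lambda>j. if j = 2*L - 1 then 1 else - Fvec L a b j)"

lemma nvec_inner:
  "vinner (2*M+2) (nvec (Suc M) a b) x = x (2*M+1) - (\<Sum>j<2*M+1. Fvec (Suc M) a b j * x j)"
proof -
  have "vinner (2*M+2) (nvec (Suc M) a b) x = (\<Sum>j<2*M+1. nvec (Suc M) a b j * x j) + nvec (Suc M) a b (2*M+1) * x (2*M+1)"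
    by (simp add: vinner_def)
  also have "(\<Sum>j<2*M+1. nvec (Suc M) a b j * x j) = (\<Sum>j<2*M+1. - (Fvec (Suc M) a b j * x j))"
    by (rule sum.cong) (auto simp: nvec_def)
  finally show ?thesis by (simp add: nvec_def sum_negf)
qed

lemma nvec_supp: "L \<ge> 1 \<Longrightarrow> \<forall>i\<ge>2*L. nvec L a b i = 0"
  by (auto simp: nvec_def Fvec_def)

lemma nvec_last: "nvec L a b (2*L - 1) = 1"
  by (simp add: nvec_def)

lemma nvec_norm:
  "vnorm (2*Suc M) (\<lambda>i. nvec (Suc M) a' b' i - nvec (Suc M) a b i)
   = vnorm (2*Suc M - 1) (\<lambda>j. Fvec (Suc M) a b j - Fvec (Suc M) a' b' j)"
proof -
  have "(\<Sum>i<2*M+2. (nvec (Suc M) a' b' i - nvec (Suc M) a b i)\<^sup>2)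
      = (\<Sum>i<2*M+1. (nvec (Suc M) a' b' i - nvec (Suc M) a b i)\<^sup>2)"
    by (simp add: nvec_def)
  also have "\<dots> = (\<Sum>i<2*M+1. (Fvec (Suc M) a b i - Fvec (Suc M) a' b' i)\<^sup>2)"
    by (rule sum.cong) (auto simp: nvec_def power2_eq_square algebra_simps)
  finally show ?thesis by (simp add: vnorm_def)
qed

lemma image_hyper:
  "coordvec (Suc M) ` {v. (\<forall>i\<ge>Suc M. v i = (0,0)) \<and>
           snd (v (Suc M - 1)) = (\<Sum>k<Suc M - 1. a k * snd (v k)) + (\<Sum>k<Suc M. b k * fst (v k))}
   = {x. (\<forall>i\<ge>2*Suc M. x i = 0) \<and> vinner (2*Suc M) (nvec (Suc M) a b) x = 0}"
  (is "?A = ?B")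
proof
  show "?A \<subseteq> ?B"
  proof
    fix x assume "x \<in> ?A"
    then obtain w where w: "snd (w M) = (\<Sum>k<M. a k * snd (w k)) + (\<Sum>k<Suc M. b k * fst (w k))"
      and x: "x = coordvec (Suc M) w" by auto
    have "vinner (2*Suc M) (nvec (Suc M) a b) x = x (2*M+1) - (\<Sum>j<2*M+1. Fvec (Suc M) a b j * x j)"
      using nvec_inner[of M a b x] by simp
    also have "\<dots> = 0" unfolding x F_coord using w by (simp add: coordvec_def)
    finally show "x \<in> ?B" using x by (simp add: coordvec_def)
  qed
next
  show "?B \<subseteq> ?A"
  proof
    fix x assume xB: "x \<in> ?B"
    define w where "w = (\<lambda>i. if i < M then (x (2*i+1), x (2*i)) else if i = M then (x (2*M), x (2*M+1)) else (0,0))"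
    have cw: "coordvec (Suc M) w = x"
    proof
      fix j
      show "coordvec (Suc M) w j = x j"
      proof (cases "j < 2*M")
        case True
        then have k: "j div 2 < M" by simp
        show ?thesis
        proof (cases "even j")
          case ev: True
          have "coordvec (Suc M) w j = snd (w (j div 2))" using True ev by (simp add: coordvec_def)
          also have "\<dots> = x (2 * (j div 2))" using k by (simp add: w_def)
          also have "2 * (j div 2) = j" using ev by simp
          finally show ?thesis .
        next
          case od: False
          have "coordvec (Suc M) w j = fst (w (j div 2))" using True od by (simp add: coordvec_def)
          also have "\<dots> = x (2 * (j div 2) + 1)" using k by (simp add: w_def)
          also have "2 * (j div 2) + 1 = j" using od by presburger
          finally show ?thesis .
        qed
      next
        case False
        then consider "j = 2*M" | "j = 2*M+1" | "j \<ge> 2*M+2" by linarith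
        then show ?thesis using xB by cases (auto simp: coordvec_def w_def)
      qed
    qed
    have "0 = vinner (2*Suc M) (nvec (Suc M) a b) x" using xB by simp
    also have "\<dots> = x (2*M+1) - (\<Sum>j<2*M+1. Fvec (Suc M) a b j * x j)"
      using nvec_inner[of M a b x] by simp
    also have "\<dots> = snd (w M) - ((\<Sum>k<M. a k * snd (w k)) + (\<Sum>k<Suc M. b k * fst (w k)))"
      using F_coord[of M a b w] unfolding cw by (simp add: w_def)
    finally have "snd (w M) = (\<Sum>k<M. a k * snd (w k)) + (\<Sum>k<Suc M. b k * fst (w k))" by simp
    moreover have "\<forall>i\<ge>Suc M. w i = (0,0)" by (simp add: w_def)
    ultimately show "x \<in> ?A" using cw by (auto intro!: image_eqI[of _ _ w])
  qed
qed


theorem corollary2: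
  fixes L :: nat and a b a' b' :: "nat \<Rightarrow> real" and B B' :: "traj set" and \<epsilon> :: real
  assumes "L \<ge> 2"
    and "LTI2 B" and "LTI2 B'" and "lag B' < L"
    and "restr B L = {v. (\<forall>i\<ge>L. v i = (0,0)) \<and>
           snd (v (L - 1)) = (\<Sum>k<L - 1. a k * snd (v k)) + (\<Sum>k<L. b k * fst (v k))}"
    and "restr B' L = {v. (\<forall>i\<ge>L. v i = (0,0)) \<and>
           snd (v (L - 1)) = (\<Sum>k<L - 1. a' k * snd (v k)) + (\<Sum>k<L. b' k * fst (v k))}"
    and "vnorm (2*L - 1) (\<lambda>j. Fvec L a b j - Fvec L a' b' j) \<le> \<epsilon>"
  shows "gapL L B B' \<le> \<epsilon>"
proof -
  define M where "M = L - 1"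
  have L: "L = Suc M" using assms(1) by (simp add: M_def)
  have r1: "restrB B L = {x. (\<forall>i\<ge>2*L. x i = 0) \<and> vinner (2*L) (nvec L a b) x = 0}"
    using image_hyper[of M a b] unfolding L[symmetric] restrB_def assms(5) .
  have r2: "restrB B' L = {x. (\<forall>i\<ge>2*L. x i = 0) \<and> vinner (2*L) (nvec L a' b') x = 0}"
    using image_hyper[of M a' b'] unfolding L[symmetric] restrB_def assms(6) .
  have "gapL L B B' \<le> vnorm (2*L) (\<lambda>i. nvec L a' b' i - nvec L a b i)"
    unfolding gapL_def r1 r2
  proof (rule gap_hyper)
    show "2*L \<ge> 1" using L by simp
    show "\<forall>i\<ge>2*L. nvec L a b i = 0" by (rule nvec_supp) (simp add: L)
    show "\<forall>i\<ge>2*L. nvec L a' b' i = 0" by (rule nvec_supp) (simp add: L)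
    show "nvec L a b (2*L - 1) = 1" by (rule nvec_last)
    show "nvec L a' b' (2*L - 1) = 1" by (rule nvec_last)
  qed
  also have "\<dots> = vnorm (2*L - 1) (\<lambda>j. Fvec L a b j - Fvec L a' b' j)"
    using nvec_norm[of M a' b' a b] unfolding L[symmetric] .
  finally have "gapL L B B' \<le> vnorm (2*L - 1) (\<lambda>j. Fvec L a b j - Fvec L a' b' j)" .
  then show ?thesis using assms(7) by (rule order_trans)
qed

end
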